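(* Let $z>0$, $a>0$ and $b>1$. Then $$\Gamma(a)\,|U(a,b,z)|\le\begin{cases}e^z z^{1-b}\Gamma(b-1), & a\ge1,\\ a^{-1}2^{b-a-1}+2^{1-a}e^zz^{1-b}\Gamma(b-1), & a<1.\end{cases}$$ Moreover, for any $a>0$, $b>0$ and $z>0$, $$\Gamma(a)\Big|\frac{d}{dz}U(a,b,z)\Big|\le\Gamma(b)\,e^zz^{-b}.$$
   Context: $U(a,b,z)$ is Kummer's (Tricomi's) confluent hypergeometric function, which for $a,z>0$ has the representation $\Gamma(a)U(a,b,z)=\int_0^\infty e^{-zt}t^{a-1}(1+t)^{b-a-1}dt$. *)

theory Defs
  imports "HOL-Analysis.Analysis"
begin

text \<open>Tricomi's confluent hypergeometric function U(a,b,z), defined for a, z > 0 via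
  Gamma(a) U(a,b,z) = integral over (0,infinity) of exp(-z t) t^(a-1) (1+t)^(b-a-1) dt.\<close>
definition KummerU :: "real \<Rightarrow> real \<Rightarrow> real \<Rightarrow> real" where
  "KummerU a b z =
     integral {0<..} (\<lambda>t. exp (- z * t) * t powr (a - 1) * (1 + t) powr (b - a - 1)) / Gamma a"

end

theory Submission
  imports Defs
begin

lemma gamma_scaled:
  fixes c p :: real
  assumes c: "c > 0" and p: "p > -1"
  shows "((\<lambda>s. exp (- c * s) * s powr p) has_integral (Gamma (p+1) * c powr (-(p+1)))) {0<..}"
proof -
  let ?f = "\<lambda>t::real. t powr p / exp t"
  have h0: "(?f has_integral Gamma (p+1)) {0..}"
    using Gamma_integral_real[of "p+1"] p by simp
  have h1: "(?f has_integral Gamma (p+1)) {0<..}"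
  proof (subst has_integral_spike_set_eq)
    show "negligible {x \<in> {0<..} - {0..}. ?f x \<noteq> 0}" by (rule negligible_subset[of "{}"]) auto
    show "negligible {x \<in> {0..} - {0<..}. ?f x \<noteq> 0}"
      by (rule negligible_subset[of "{0}"]) auto
    show "(?f has_integral Gamma (p + 1)) {0..}" by (rule h0)
  qed
  have ai: "?f absolutely_integrable_on {0<..}"
    by (rule nonnegative_absolutely_integrable_1) (use h1 in auto)
  have img: "(\<lambda>x. c * x) ` {0<..} = ({0<..}::real set)"
  proof safe
    fix y :: real assume "y > 0"
    then show "y \<in> (\<lambda>x. c * x) ` {0<..}" using c
      by (intro image_eqI[of _ _ "y / c"]) auto
  qed (use c in auto)
  have der: "\<And>x. x \<in> {0<..} \<Longrightarrow> ((\<lambda>x. c*x) has_field_derivative c) (at x within {0<..})"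
    by (auto intro!: derivative_eq_intros)
  have inj: "inj_on (\<lambda>x. c*x) ({0<..}::real set)" using c by (auto simp: inj_on_def)
  have cv: "((\<lambda>x. \<bar>c\<bar> * ?f (c * x)) absolutely_integrable_on {0<..} \<and>
           integral {0<..} (\<lambda>x. \<bar>c\<bar> * ?f (c * x)) = Gamma (p+1))
     \<longleftrightarrow> (?f absolutely_integrable_on ((\<lambda>x. c*x) ` {0<..}) \<and> integral ((\<lambda>x. c*x) ` {0<..}) ?f = Gamma (p+1))"
    by (rule has_absolute_integral_change_of_variables_1'[OF _ der inj]) auto
  have "(\<lambda>x. \<bar>c\<bar> * ?f (c * x)) absolutely_integrable_on {0<..} \<and>
           integral {0<..} (\<lambda>x. \<bar>c\<bar> * ?f (c * x)) = Gamma (p+1)"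
    using cv ai h1 img by (simp add: integral_unique)
  hence A: "((\<lambda>x. c * ?f (c * x)) has_integral Gamma (p+1)) {0<..}"
    using c by (metis abs_of_pos absolutely_integrable_on_def has_integral_integral)
  have B: "((\<lambda>x. c powr (-(p+1)) * (c * ?f (c * x))) has_integral (c powr (-(p+1)) * Gamma (p+1))) {0<..}"
    by (rule has_integral_mult_right[OF A])
  show ?thesis
  proof (rule has_integral_eq[OF _ B[unfolded mult.commute[of "c powr _" "Gamma _"]]])
    fix x :: real assume "x \<in> {0<..}"
    then have x: "x > 0" by simp
    have "c powr (-(p+1)) * (c * ((c*x) powr p / exp (c*x))) = c powr (-(p+1)) * c powr 1 * c powr p * x powr p / exp (c*x)"
      using c x by (simp add: powr_mult)
    also have "\<dots> = x powr p / exp (c*x)"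
    proof -
      have "c powr (-(p+1)) * c powr 1 * c powr p = c powr (-(p+1) + 1 + p)" by (simp only: powr_add)
      also have "\<dots> = 1" using c by simp
      finally show ?thesis by simp
    qed
    finally show "c powr (-(p+1)) * (c * ?f (c * x)) = exp (- c * x) * x powr p"
      by (simp add: exp_minus field_simps)
  qed
qed

lemma meas_cont:
  assumes "continuous_on {0<..} (f :: real \<Rightarrow> real)"
  shows "f \<in> borel_measurable (lebesgue_on {0<..})"
  by (rule continuous_imp_measurable_on_sets_lebesgue[OF assms]) auto

lemma int_sub:
  fixes f :: "real \<Rightarrow> real"
  assumes "f integrable_on S" "\<And>x. x \<in> S \<Longrightarrow> 0 \<le> f x" "T \<in> sets lebesgue" "T \<subseteq> S"
  shows "f integrable_on T"
proof -
  have "f absolutely_integrable_on S" by (rule nonnegative_absolutely_integrable_1) (use assms in auto)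
  then have "f absolutely_integrable_on T" using set_integrable_subset assms by blast
  then show ?thesis by (simp add: absolutely_integrable_on_def)
qed

lemma powr_split:
  fixes t q :: real
  assumes t: "t > 0"
  shows "(1+t) powr q \<le> 2 powr (max q 0) * (1 + t powr (max q 0))"
proof -
  let ?m = "max q 0"
  have "(1+t) powr q \<le> (1+t) powr ?m" using t by (intro powr_mono) auto
  also have "\<dots> \<le> (2 * max 1 t) powr ?m" using t by (intro powr_mono2) auto
  also have "\<dots> = 2 powr ?m * (max 1 t) powr ?m" using t by (simp add: powr_mult)
  also have "\<dots> \<le> 2 powr ?m * (1 + t powr ?m)"
  proof (rule mult_left_mono)
    show "max 1 t powr ?m \<le> 1 + t powr ?m"
      using t by (cases "t \<le> 1") (auto simp: max_def)
  qed simp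
  finally show ?thesis .
qed

lemma integ_E:
  fixes c p q :: real
  assumes c: "c > 0" and p: "p > -1"
  shows "(\<lambda>t. exp (- c * t) * t powr p * (1+t) powr q) integrable_on {0<..}"
proof (rule measurable_bounded_by_integrable_imp_integrable_real)
  let ?m = "max q 0"
  show "(\<lambda>t. exp (- c * t) * t powr p * (1+t) powr q) \<in> borel_measurable (lebesgue_on {0<..})"
    by (rule meas_cont) (auto intro!: continuous_intros)
  have i1: "(\<lambda>s. exp (- c * s) * s powr p) integrable_on {0<..}"
    using gamma_scaled[OF c p] by blast
  have i2: "(\<lambda>s. exp (- c * s) * s powr (p + ?m)) integrable_on {0<..}"
    using gamma_scaled[OF c, of "p + ?m"] p by fastforce
  show "(\<lambda>t. 2 powr ?m * (exp (- c * t) * t powr p + exp (- c * t) * t powr (p + ?m))) integrable_on {0<..}"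
    by (intro integrable_on_mult_right integrable_add i1 i2)
  show "\<bar>exp (- c * t) * t powr p * (1+t) powr q\<bar> \<le> 2 powr ?m * (exp (- c * t) * t powr p + exp (- c * t) * t powr (p + ?m))"
    if "t \<in> {0<..}" for t
  proof -
    from that have t: "t > 0" by simp
    have "\<bar>exp (- c * t) * t powr p * (1+t) powr q\<bar> = (exp (- c * t) * t powr p) * (1+t) powr q"
      by simp
    also have "\<dots> \<le> (exp (- c * t) * t powr p) * (2 powr ?m * (1 + t powr ?m))"
      by (intro mult_left_mono powr_split t) simp
    also have "\<dots> = 2 powr ?m * (exp (- c * t) * t powr p + exp (- c * t) * t powr (p + ?m))"
      using t by (simp add: powr_add algebra_simps)
    finally show ?thesis .
  qed
qed auto

lemma shift:
  fixes c q :: real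
  assumes c: "c > 0" and q: "q > -1"
  shows "((\<lambda>t. exp (- c * t) * (1+t) powr q) has_integral
           (exp c * integral {1<..} (\<lambda>s. exp (- c * s) * s powr q))) {0<..}"
proof -
  let ?f = "\<lambda>s. exp (- c * s) * s powr q"
  have i0: "?f integrable_on {0<..}" using gamma_scaled[OF c q] by blast
  have i1: "?f integrable_on {1<..}" by (rule int_sub[OF i0]) auto
  have ai: "?f absolutely_integrable_on {1<..}"
    by (rule nonnegative_absolutely_integrable_1[OF i1]) auto
  have img: "(\<lambda>x. x + 1) ` {0<..} = ({1<..}::real set)"
  proof safe
    fix y :: real assume "y > 1"
    then show "y \<in> (\<lambda>x. x + 1) ` {0<..}" by (intro image_eqI[of _ _ "y - 1"]) auto
  qed auto
  have der: "\<And>x. x \<in> {0<..} \<Longrightarrow> ((\<lambda>x. x + 1) has_field_derivative 1) (at x within {0<..})"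
    by (auto intro!: derivative_eq_intros)
  have inj: "inj_on (\<lambda>x. x + 1) ({0<..}::real set)" by (auto simp: inj_on_def)
  have cv: "((\<lambda>x. \<bar>1\<bar> * ?f (x + 1)) absolutely_integrable_on {0<..} \<and>
           integral {0<..} (\<lambda>x. \<bar>1\<bar> * ?f (x + 1)) = integral {1<..} ?f)
     \<longleftrightarrow> (?f absolutely_integrable_on ((\<lambda>x. x + 1) ` {0<..}) \<and> integral ((\<lambda>x. x + 1) ` {0<..}) ?f = integral {1<..} ?f)"
    by (rule has_absolute_integral_change_of_variables_1'[OF _ der inj]) auto
  have "(\<lambda>x. ?f (x + 1)) absolutely_integrable_on {0<..} \<and>
           integral {0<..} (\<lambda>x. ?f (x + 1)) = integral {1<..} ?f"
    using cv ai img by simp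
  hence A: "((\<lambda>x. ?f (x + 1)) has_integral integral {1<..} ?f) {0<..}"
    by (metis absolutely_integrable_on_def has_integral_integral)
  have B: "((\<lambda>x. exp c * ?f (x + 1)) has_integral (exp c * integral {1<..} ?f)) {0<..}"
    by (rule has_integral_mult_right[OF A])
  show ?thesis
  proof (rule has_integral_eq[OF _ B])
    fix x :: real
    show "exp c * ?f (x + 1) = exp (- c * x) * (1+x) powr q"
    proof -
      have "exp c * exp (- c * (x + 1)) = exp (- c * x)"
        by (simp add: exp_add[symmetric] algebra_simps)
      then show ?thesis by (simp only: mult.assoc[symmetric] add.commute[of x 1])
    qed
  qed
qed

lemma shift_bound:
  fixes c q :: real
  assumes c: "c > 0" and q: "q > -1"
  shows "(\<lambda>t. exp (- c * t) * (1+t) powr q) integrable_on {0<..}"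
    and "integral {0<..} (\<lambda>t. exp (- c * t) * (1+t) powr q)
           = exp c * integral {1<..} (\<lambda>s. exp (- c * s) * s powr q)"
    and "integral {1<..} (\<lambda>s. exp (- c * s) * s powr q) \<le> Gamma (q+1) * c powr (-(q+1))"
proof -
  let ?f = "\<lambda>s. exp (- c * s) * s powr q"
  show "(\<lambda>t. exp (- c * t) * (1+t) powr q) integrable_on {0<..}"
    using shift[OF c q] by blast
  show "integral {0<..} (\<lambda>t. exp (- c * t) * (1+t) powr q)
           = exp c * integral {1<..} ?f"
    using shift[OF c q] by (rule integral_unique)
  have i0: "?f integrable_on {0<..}" using gamma_scaled[OF c q] by blast
  have i1: "?f integrable_on {1<..}" by (rule int_sub[OF i0]) auto
  have "integral {1<..} ?f \<le> integral {0<..} ?f"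
    by (rule integral_subset_le[OF _ i1 i0]) auto
  also have "\<dots> = Gamma (q+1) * c powr (-(q+1))"
    using gamma_scaled[OF c q] by (rule integral_unique)
  finally show "integral {1<..} ?f \<le> Gamma (q+1) * c powr (-(q+1))" .
qed

lemma powr01:
  fixes r :: real
  assumes "r > -1"
  shows "((\<lambda>x. x powr r) has_integral (1 / (r+1))) {0<..1}"
proof -
  have h: "((\<lambda>x. x powr r) has_integral (1 powr (r+1) / (r+1))) {0..1}"
    by (rule has_integral_powr_from_0) (use assms in auto)
  show ?thesis
  proof (subst has_integral_spike_set_eq)
    show "negligible {x \<in> {0<..1} - {0..1}. x powr r \<noteq> 0}"
      by (rule negligible_subset[of "{}"]) auto
    show "negligible {x \<in> {0..1} - {0<..1}. x powr r \<noteq> 0}"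
      by (rule negligible_subset[of "{0}"]) auto
    show "((\<lambda>x. x powr r) has_integral 1 / (r + 1)) {0..1}" using h by simp
  qed
qed

lemma part1_ge1:
  fixes a b z :: real
  assumes z: "z > 0" and a: "a \<ge> 1" and b: "b > 1"
  shows "integral {0<..} (\<lambda>t. exp (- z * t) * t powr (a - 1) * (1 + t) powr (b - a - 1))
           \<le> exp z * z powr (1 - b) * Gamma (b - 1)"
proof -
  let ?f = "\<lambda>t. exp (- z * t) * t powr (a - 1) * (1 + t) powr (b - a - 1)"
  let ?g = "\<lambda>t. exp (- z * t) * (1 + t) powr (b - 2)"
  have fi: "?f integrable_on {0<..}" by (rule integ_E) (use z a in auto)
  have gi: "?g integrable_on {0<..}" by (rule shift_bound(1)) (use z b in auto)
  have "integral {0<..} ?f \<le> integral {0<..} ?g"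
  proof (rule integral_le[OF fi gi])
    fix t :: real assume "t \<in> {0<..}"
    hence t: "t > 0" by simp
    have "t powr (a - 1) \<le> (1+t) powr (a - 1)" using t a by (intro powr_mono2) auto
    hence "?f t \<le> exp (- z * t) * (1+t) powr (a - 1) * (1 + t) powr (b - a - 1)"
      by (intro mult_right_mono mult_left_mono) auto
    also have "\<dots> = ?g t" using t by (simp add: mult.assoc powr_add[symmetric])
    finally show "?f t \<le> ?g t" .
  qed
  also have "\<dots> = exp z * integral {1<..} (\<lambda>s. exp (- z * s) * s powr (b - 2))"
    by (rule shift_bound(2)) (use z b in auto)
  also have "\<dots> \<le> exp z * (Gamma (b - 2 + 1) * z powr (-(b - 2 + 1)))"
    by (intro mult_left_mono shift_bound(3)) (use z b in auto)
  also have "\<dots> = exp z * z powr (1 - b) * Gamma (b - 1)" by simp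
  finally show ?thesis .
qed

lemma t_pow_le:
  fixes a t :: real
  assumes a: "a < 1" and t: "t \<ge> 1"
  shows "t powr (a - 1) \<le> 2 powr (1 - a) * (1 + t) powr (a - 1)"
proof -
  have "(1+t) powr (1 - a) \<le> (2*t) powr (1 - a)" using a t by (intro powr_mono2) auto
  also have "\<dots> = 2 powr (1 - a) * t powr (1 - a)" using t by (simp add: powr_mult)
  finally have *: "(1+t) powr (1 - a) \<le> 2 powr (1 - a) * t powr (1 - a)" .
  have "t powr (a - 1) = t powr (a - 1) * ((1+t) powr (1 - a) * (1+t) powr (a - 1))"
    using t by (simp add: powr_add[symmetric])
  also have "\<dots> \<le> t powr (a - 1) * ((2 powr (1 - a) * t powr (1 - a)) * (1+t) powr (a - 1))"
    by (intro mult_left_mono mult_right_mono *) auto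
  also have "\<dots> = 2 powr (1 - a) * (t powr (a - 1) * t powr (1 - a)) * (1+t) powr (a - 1)"
    by (simp add: algebra_simps)
  also have "t powr (a - 1) * t powr (1 - a) = 1" using t by (simp add: powr_add[symmetric])
  finally show ?thesis by simp
qed

lemma part1_lt1:
  fixes a b z :: real
  assumes z: "z > 0" and a0: "a > 0" and a: "a < 1" and b: "b > 1"
  shows "integral {0<..} (\<lambda>t. exp (- z * t) * t powr (a - 1) * (1 + t) powr (b - a - 1))
           \<le> 2 powr (b - a - 1) / a + 2 powr (1 - a) * exp z * z powr (1 - b) * Gamma (b - 1)"
proof -
  let ?f = "\<lambda>t. exp (- z * t) * t powr (a - 1) * (1 + t) powr (b - a - 1)"
  let ?S1 = "{0<..1} :: real set" and ?S2 = "{1<..} :: real set"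
  let ?e = "\<lambda>s. exp (- z * s) * s powr (b - 2)"
  let ?I1 = "integral ?S2 ?e"
  let ?B1 = "if b - a - 1 \<ge> 0 then 2 powr (b - a - 1) / a else 1 / (b - 1)"
  have fi: "?f integrable_on {0<..}" by (rule integ_E) (use z a0 in auto)
  have fnn: "\<And>t. t \<in> {0<..} \<Longrightarrow> 0 \<le> ?f t" by simp
  have fi1: "?f integrable_on ?S1" by (rule int_sub[OF fi fnn]) auto
  have fi2: "?f integrable_on ?S2" by (rule int_sub[OF fi fnn]) auto
  have un: "integral {0<..} ?f = integral ?S1 ?f + integral ?S2 ?f"
  proof -
    have "?S1 \<union> ?S2 = {0<..}" by auto
    moreover have "integral (?S1 \<union> ?S2) ?f = integral ?S1 ?f + integral ?S2 ?f"
      by (rule integral_Un[OF fi1 fi2]) (auto intro: negligible_subset[of "{}"])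
    ultimately show ?thesis by simp
  qed
  have A: "integral ?S1 ?f \<le> ?B1"
  proof (cases "b - a - 1 \<ge> 0")
    case True
    have h: "((\<lambda>t. 2 powr (b - a - 1) * t powr (a - 1)) has_integral (2 powr (b - a - 1) * (1 / (a - 1 + 1)))) ?S1"
      by (rule has_integral_mult_right, rule powr01) (use a0 in auto)
    have "integral ?S1 ?f \<le> 2 powr (b - a - 1) * (1 / (a - 1 + 1))"
    proof (rule has_integral_le[OF integrable_integral[OF fi1] h])
      fix t assume "t \<in> ?S1"
      hence t: "0 < t" "t \<le> 1" by auto
      have e: "exp (- z * t) \<le> 1" using z t by simp
      have p: "(1 + t) powr (b - a - 1) \<le> 2 powr (b - a - 1)" using t True by (intro powr_mono2) auto
      have "?f t \<le> 1 * t powr (a - 1) * 2 powr (b - a - 1)"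
        by (intro mult_mono e p) auto
      then show "?f t \<le> 2 powr (b - a - 1) * t powr (a - 1)" by (simp add: mult.commute)
    qed
    then show ?thesis using True by simp
  next
    case False
    have h: "((\<lambda>t. t powr (b - 2)) has_integral (1 / (b - 2 + 1))) ?S1"
      by (rule powr01) (use b in auto)
    have "integral ?S1 ?f \<le> 1 / (b - 2 + 1)"
    proof (rule has_integral_le[OF integrable_integral[OF fi1] h])
      fix t assume "t \<in> ?S1"
      hence t: "0 < t" "t \<le> 1" by auto
      have e: "exp (- z * t) \<le> 1" using z t by simp
      have p: "(1 + t) powr (b - a - 1) \<le> 1"
        using powr_mono[of "b - a - 1" 0 "1+t"] t False by auto
      have q: "t powr (a - 1) \<le> t powr (b - 2)" using t False by (intro powr_mono') auto
      have "?f t \<le> 1 * t powr (a - 1) * 1"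
        by (intro mult_mono e p) auto
      then show "?f t \<le> t powr (b - 2)" using q by simp
    qed
    then show ?thesis using False by simp
  qed
  have B1le: "?B1 \<le> 2 powr (b - a - 1) / a + 2 powr (1 - a) * (1 / (b - 1))"
  proof -
    have "1 \<le> 2 powr (1 - a)" using a by (intro ge_one_powr_ge_zero) auto
    hence "1 / (b - 1) \<le> 2 powr (1 - a) * (1 / (b - 1))" using b
      by (metis divide_right_mono less_eq_real_def diff_gt_0_iff_gt times_divide_eq_right mult.right_neutral)
    moreover have "0 \<le> 2 powr (b - a - 1) / a" using a0 by simp
    moreover have "0 \<le> 2 powr (1 - a) * (1 / (b - 1))" using b by simp
    ultimately show ?thesis by auto
  qed
  let ?g = "\<lambda>t. 2 powr (1 - a) * (exp (- z * t) * (1 + t) powr (b - 2))"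
  have gi0: "(\<lambda>t. exp (- z * t) * (1 + t) powr (b - 2)) integrable_on {0<..}"
    by (rule shift_bound(1)) (use z b in auto)
  have gi: "?g integrable_on {0<..}" by (rule integrable_on_mult_right[OF gi0])
  have gi2: "?g integrable_on ?S2" by (rule int_sub[OF gi]) auto
  have B: "integral ?S2 ?f \<le> 2 powr (1 - a) * (exp z * ?I1)"
  proof -
    have "integral ?S2 ?f \<le> integral ?S2 ?g"
    proof (rule integral_le[OF fi2 gi2])
      fix t assume "t \<in> ?S2"
      hence t: "t > 1" by auto
      have "?f t \<le> exp (- z * t) * (2 powr (1 - a) * (1 + t) powr (a - 1)) * (1 + t) powr (b - a - 1)"
        using t_pow_le[OF a, of t] t by (intro mult_right_mono mult_left_mono) auto
      also have "\<dots> = ?g t" using t by (simp add: powr_add[symmetric] algebra_simps)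
      finally show "?f t \<le> ?g t" .
    qed
    also have "\<dots> \<le> integral {0<..} ?g"
      by (rule integral_subset_le[OF _ gi2 gi]) auto
    also have "\<dots> = 2 powr (1 - a) * integral {0<..} (\<lambda>t. exp (- z * t) * (1 + t) powr (b - 2))"
      by simp
    also have "integral {0<..} (\<lambda>t. exp (- z * t) * (1 + t) powr (b - 2)) = exp z * ?I1"
      by (rule shift_bound(2)) (use z b in auto)
    finally show ?thesis .
  qed
  have C: "1 / (b - 1) + exp z * ?I1 \<le> exp z * z powr (1 - b) * Gamma (b - 1)"
  proof -
    have hg: "(?e has_integral (Gamma (b - 2 + 1) * z powr (-(b - 2 + 1)))) {0<..}"
      by (rule gamma_scaled) (use z b in auto)
    have ei: "?e integrable_on {0<..}" using hg by blast
    have enn: "\<And>t. t \<in> {0<..} \<Longrightarrow> 0 \<le> ?e t" by simp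
    have ei1: "?e integrable_on ?S1" by (rule int_sub[OF ei enn]) auto
    have ei2: "?e integrable_on ?S2" by (rule int_sub[OF ei enn]) auto
    have "integral {0<..} ?e = integral ?S1 ?e + ?I1"
    proof -
      have "?S1 \<union> ?S2 = {0<..}" by auto
      moreover have "integral (?S1 \<union> ?S2) ?e = integral ?S1 ?e + integral ?S2 ?e"
        by (rule integral_Un[OF ei1 ei2]) (auto intro: negligible_subset[of "{}"])
      ultimately show ?thesis by simp
    qed
    moreover have "integral {0<..} ?e = z powr (1 - b) * Gamma (b - 1)"
      using integral_unique[OF hg] by simp
    moreover have "exp (- z) * (1 / (b - 1)) \<le> integral ?S1 ?e"
    proof -
      have h: "((\<lambda>t. exp (- z) * t powr (b - 2)) has_integral (exp (- z) * (1 / (b - 2 + 1)))) ?S1"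
        by (rule has_integral_mult_right, rule powr01) (use b in auto)
      have "exp (- z) * (1 / (b - 2 + 1)) \<le> integral ?S1 ?e"
      proof (rule has_integral_le[OF h integrable_integral[OF ei1]])
        fix t assume "t \<in> ?S1"
        hence t: "0 < t" "t \<le> 1" by auto
        have "exp (- z) \<le> exp (- z * t)" using z t by simp
        then show "exp (- z) * t powr (b - 2) \<le> ?e t" by (intro mult_right_mono) auto
      qed
      then show ?thesis by simp
    qed
    ultimately have "exp (- z) * (1 / (b - 1)) + ?I1 \<le> z powr (1 - b) * Gamma (b - 1)"
      by linarith
    then have "exp z * (exp (- z) * (1 / (b - 1)) + ?I1) \<le> exp z * (z powr (1 - b) * Gamma (b - 1))"
      by (rule mult_left_mono) simp
    then have "exp z * (exp (- z) * (1 / (b - 1))) + exp z * ?I1 \<le> exp z * (z powr (1 - b) * Gamma (b - 1))"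
      by (simp only: distrib_left)
    moreover have "exp z * (exp (- z) * (1 / (b - 1))) = 1 / (b - 1)"
      by (simp add: exp_minus)
    ultimately have "1 / (b - 1) + exp z * ?I1 \<le> exp z * (z powr (1 - b) * Gamma (b - 1))"
      by metis
    thus ?thesis by (simp only: mult.assoc)
  qed
  have "integral {0<..} ?f \<le> ?B1 + 2 powr (1 - a) * (exp z * ?I1)"
    using un A B by simp
  also have "\<dots> \<le> 2 powr (b - a - 1) / a + 2 powr (1 - a) * (1 / (b - 1) + exp z * ?I1)"
    using B1le by (simp add: distrib_left)
  also have "\<dots> \<le> 2 powr (b - a - 1) / a + 2 powr (1 - a) * (exp z * z powr (1 - b) * Gamma (b - 1))"
    using C by (intro add_left_mono mult_left_mono) auto
  finally show ?thesis by (simp add: mult.assoc)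
qed

lemma powr_shift1:
  fixes t a :: real
  assumes "t > 0"
  shows "t powr a = t * t powr (a - 1)"
proof -
  have "t powr a = t powr (1 + (a - 1))" by simp
  also have "\<dots> = t powr 1 * t powr (a - 1)" by (rule powr_add)
  finally show ?thesis using assms by simp
qed

lemma exp_taylor:
  fixes x :: real
  shows "\<bar>exp x - 1 - x\<bar> \<le> x^2 * exp \<bar>x\<bar>"
proof -
  obtain t where t: "\<bar>t\<bar> \<le> \<bar>x\<bar>" and e: "exp x = (\<Sum>m<2. x ^ m / fact m) + exp t / fact 2 * x ^ 2"
    using Maclaurin_exp_le[of x 2] by blast
  have "exp x - 1 - x = exp t / 2 * x^2" using e by (simp add: eval_nat_numeral)
  moreover have "0 \<le> exp t / 2 * x^2" by simp
  ultimately have "\<bar>exp x - 1 - x\<bar> = exp t / 2 * x^2" by (metis abs_of_nonneg)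
  also have "\<dots> \<le> exp \<bar>x\<bar> * x^2"
  proof (rule mult_right_mono)
    have "exp t \<le> exp \<bar>x\<bar>" using t by simp
    then show "exp t / 2 \<le> exp \<bar>x\<bar>" using exp_gt_zero[of t] by linarith
  qed simp
  finally show ?thesis by (simp add: mult.commute)
qed

lemma deriv_part:
  fixes a b z :: real
  assumes z: "z > 0" and a: "a > 0"
  shows "DERIV (\<lambda>w. integral {0<..} (\<lambda>t. exp (- w * t) * t powr (a - 1) * (1 + t) powr (b - a - 1))) z :>
           - integral {0<..} (\<lambda>t. exp (- z * t) * t powr a * (1 + t) powr (b - a - 1))"
proof -
  define \<phi> where "\<phi> = (\<lambda>w t. exp (- w * t) * t powr (a - 1) * (1 + t) powr (b - a - 1))"
  define F where "F = (\<lambda>w. integral {0<..} (\<phi> w))"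
  define \<psi> where "\<psi> = (\<lambda>t. exp (- z * t) * t powr a * (1 + t) powr (b - a - 1))"
  define \<rho> where "\<rho> = (\<lambda>t. exp (- (z/2) * t) * t powr (a + 1) * (1 + t) powr (b - a - 1))"
  define D where "D = - integral {0<..} \<psi>"
  define M where "M = integral {0<..} \<rho>"
  have iphi: "\<phi> w integrable_on {0<..}" if "w > 0" for w
    unfolding \<phi>_def by (rule integ_E) (use that a in auto)
  have ipsi: "\<psi> integrable_on {0<..}" unfolding \<psi>_def by (rule integ_E) (use z a in auto)
  have irho: "\<rho> integrable_on {0<..}" unfolding \<rho>_def by (rule integ_E) (use z a in auto)
  have key: "norm ((F (z + h) - F z) / h - D) \<le> norm h * M"
    if h0: "h \<noteq> 0" and hz: "\<bar>h\<bar> < z/2" for h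
  proof -
    define Q where "Q = (\<lambda>t. (1/h) * (\<phi> (z+h) t - \<phi> z t) + \<psi> t)"
    have hQ: "(Q has_integral ((1/h) * (F (z+h) - F z) + integral {0<..} \<psi>)) {0<..}"
      unfolding Q_def F_def
      by (intro has_integral_add has_integral_mult_right has_integral_diff integrable_integral iphi ipsi)
         (use z hz in auto)
    have eq: "(F (z + h) - F z) / h - D = integral {0<..} Q"
      using integral_unique[OF hQ] by (simp add: D_def divide_inverse mult.commute)
    have bnd: "norm (Q t) \<le> \<bar>h\<bar> * \<rho> t" if "t \<in> {0<..}" for t
    proof -
      from that have t: "t > 0" by simp
      let ?P = "\<phi> z t"
      have Pnn: "?P \<ge> 0" unfolding \<phi>_def by simp
      have e1: "\<phi> (z+h) t = exp (- h * t) * ?P"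
        unfolding \<phi>_def by (simp add: algebra_simps exp_add[symmetric])
      have e2: "\<psi> t = t * ?P"
        unfolding \<phi>_def \<psi>_def using t by (simp add: powr_shift1[OF t, of a] algebra_simps)
      have e3: "\<rho> t = exp (\<bar>h\<bar> * t - z * t) * exp (- (z/2) * t - \<bar>h\<bar> * t + z * t) * t^2 * (t powr (a - 1) * (1 + t) powr (b - a - 1))"
      proof -
        have "t powr (a + 1) = t^2 * t powr (a - 1)"
          using powr_shift1[OF t, of "a+1"] powr_shift1[OF t, of "a"] by (simp add: power2_eq_square)
        moreover have "exp (\<bar>h\<bar> * t - z * t) * exp (- (z/2) * t - \<bar>h\<bar> * t + z * t) = exp (- (z/2) * t)"
          by (simp add: exp_add[symmetric])
        ultimately show ?thesis unfolding \<rho>_def by (simp add: algebra_simps)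
      qed
      have "Q t = ?P * ((exp (- h * t) - 1 - (- h * t)) / h)"
        unfolding Q_def e1 e2 using h0 by (simp add: field_simps)
      hence "norm (Q t) = ?P * (\<bar>exp (- h * t) - 1 - (- h * t)\<bar> / \<bar>h\<bar>)"
        using Pnn by (simp add: abs_mult)
      also have "\<dots> \<le> ?P * (((- h * t)^2 * exp \<bar>- h * t\<bar>) / \<bar>h\<bar>)"
        by (intro mult_left_mono divide_right_mono exp_taylor Pnn) simp
      also have "\<dots> = \<bar>h\<bar> * (exp (\<bar>h\<bar> * t) * ?P * t^2)"
        using h0 t by (simp add: power2_eq_square abs_mult field_simps)
      also have "exp (\<bar>h\<bar> * t) * ?P = exp (\<bar>h\<bar> * t - z * t) * (t powr (a - 1) * (1 + t) powr (b - a - 1))"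
        unfolding \<phi>_def by (simp add: exp_diff exp_minus field_simps)
      also have "\<bar>h\<bar> * (exp (\<bar>h\<bar> * t - z * t) * (t powr (a - 1) * (1 + t) powr (b - a - 1)) * t^2) \<le> \<bar>h\<bar> * \<rho> t"
      proof -
        have "1 \<le> exp (- (z/2) * t - \<bar>h\<bar> * t + z * t)"
        proof -
          have "0 \<le> - (z/2) * t - \<bar>h\<bar> * t + z * t"
            using hz t by (simp add: algebra_simps)
          thus ?thesis by simp
        qed
        hence "exp (\<bar>h\<bar> * t - z * t) * (t powr (a - 1) * (1 + t) powr (b - a - 1)) * t^2
              \<le> exp (\<bar>h\<bar> * t - z * t) * (t powr (a - 1) * (1 + t) powr (b - a - 1)) * t^2 * exp (- (z/2) * t - \<bar>h\<bar> * t + z * t)"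
          using mult_left_mono[OF \<open>1 \<le> exp (- (z/2) * t - \<bar>h\<bar> * t + z * t)\<close>,
                 of "exp (\<bar>h\<bar> * t - z * t) * (t powr (a - 1) * (1 + t) powr (b - a - 1)) * t^2"]
          by simp
        also have "\<dots> = \<rho> t" unfolding e3 by (simp add: algebra_simps)
        finally show ?thesis by (intro mult_left_mono) auto
      qed
      finally show ?thesis .
    qed
    have "norm (integral {0<..} Q) \<le> integral {0<..} (\<lambda>t. \<bar>h\<bar> * \<rho> t)"
      by (rule Henstock_Kurzweil_Integration.integral_norm_bound_integral[OF has_integral_integrable[OF hQ] _ bnd])
         (rule integrable_on_mult_right[OF irho])
    also have "\<dots> = norm h * M" unfolding M_def by simp
    finally show ?thesis using eq by simp
  qed
  have lim: "((\<lambda>h. (F (z + h) - F z) / h - D) \<longlongrightarrow> 0) (at 0)"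
  proof (rule Lim_null_comparison)
    show "\<forall>\<^sub>F h in at 0. norm ((F (z + h) - F z) / h - D) \<le> norm h * M"
      unfolding eventually_at
    proof (intro exI[of _ "z/2"] conjI ballI impI)
      show "z/2 > 0" using z by simp
      fix h :: real assume "h \<noteq> 0 \<and> dist h 0 < z/2"
      then show "norm ((F (z + h) - F z) / h - D) \<le> norm h * M" by (intro key) auto
    qed
    show "((\<lambda>h. norm h * M) \<longlongrightarrow> 0) (at (0::real))"
      by (auto intro!: tendsto_eq_intros)
  qed
  have "DERIV F z :> D"
    unfolding DERIV_def using lim by (simp add: LIM_zero_iff)
  then show ?thesis unfolding F_def \<phi>_def D_def \<psi>_def .
qed

lemma part2_bound:
  fixes a b z :: real
  assumes z: "z > 0" and a: "a > 0" and b: "b > 0"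
  shows "integral {0<..} (\<lambda>t. exp (- z * t) * t powr a * (1 + t) powr (b - a - 1))
           \<le> Gamma b * exp z * z powr (- b)"
proof -
  let ?f = "\<lambda>t. exp (- z * t) * t powr a * (1 + t) powr (b - a - 1)"
  let ?g = "\<lambda>t. exp (- z * t) * (1 + t) powr (b - 1)"
  have fi: "?f integrable_on {0<..}" by (rule integ_E) (use z a in auto)
  have gi: "?g integrable_on {0<..}" by (rule shift_bound(1)) (use z b in auto)
  have "integral {0<..} ?f \<le> integral {0<..} ?g"
  proof (rule integral_le[OF fi gi])
    fix t :: real assume "t \<in> {0<..}"
    hence t: "t > 0" by simp
    have "t powr a \<le> (1+t) powr a" using t a by (intro powr_mono2) auto
    hence "?f t \<le> exp (- z * t) * (1+t) powr a * (1 + t) powr (b - a - 1)"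
      by (intro mult_right_mono mult_left_mono) auto
    also have "\<dots> = ?g t" using t by (simp add: mult.assoc powr_add[symmetric])
    finally show "?f t \<le> ?g t" .
  qed
  also have "\<dots> = exp z * integral {1<..} (\<lambda>s. exp (- z * s) * s powr (b - 1))"
    by (rule shift_bound(2)) (use z b in auto)
  also have "\<dots> \<le> exp z * (Gamma (b - 1 + 1) * z powr (-(b - 1 + 1)))"
    by (intro mult_left_mono shift_bound(3)) (use z b in auto)
  also have "\<dots> = Gamma b * exp z * z powr (- b)" by simp
  finally show ?thesis .
qed

theorem lemmaA1:
  fixes a b z :: real
  assumes "z > 0" and "a > 0"
  shows "(b > 1 \<longrightarrow>
            Gamma a * \<bar>KummerU a b z\<bar> \<le>
              (if a \<ge> 1 then exp z * z powr (1 - b) * Gamma (b - 1)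
               else 2 powr (b - a - 1) / a + 2 powr (1 - a) * exp z * z powr (1 - b) * Gamma (b - 1)))
       \<and> (b > 0 \<longrightarrow>
            Gamma a * \<bar>deriv (\<lambda>w. KummerU a b w) z\<bar> \<le> Gamma b * exp z * z powr (- b))"
proof (intro conjI impI)
  have z: "z > 0" and a: "a > 0" using assms by auto
  have G: "Gamma a > 0" using a by (rule Gamma_real_pos)
  let ?I = "integral {0<..} (\<lambda>t. exp (- z * t) * t powr (a - 1) * (1 + t) powr (b - a - 1))"
  have Ii: "(\<lambda>t. exp (- z * t) * t powr (a - 1) * (1 + t) powr (b - a - 1)) integrable_on {0<..}"
    by (rule integ_E) (use z a in auto)
  have Inn: "0 \<le> ?I" by (rule integral_nonneg[OF Ii]) simp
  have K: "Gamma a * \<bar>KummerU a b z\<bar> = ?I"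
    unfolding KummerU_def using G Inn by (simp add: abs_divide)
  {
    assume b: "b > 1"
    show "Gamma a * \<bar>KummerU a b z\<bar> \<le>
              (if a \<ge> 1 then exp z * z powr (1 - b) * Gamma (b - 1)
               else 2 powr (b - a - 1) / a + 2 powr (1 - a) * exp z * z powr (1 - b) * Gamma (b - 1))"
    proof (cases "a \<ge> 1")
      case True
      then show ?thesis unfolding K using part1_ge1[OF z True b] by simp
    next
      case False
      then show ?thesis unfolding K using part1_lt1[OF z a _ b] by simp
    qed
  }
  {
    assume b: "b > 0"
    let ?J = "integral {0<..} (\<lambda>t. exp (- z * t) * t powr a * (1 + t) powr (b - a - 1))"
    have Ji: "(\<lambda>t. exp (- z * t) * t powr a * (1 + t) powr (b - a - 1)) integrable_on {0<..}"
      by (rule integ_E) (use z a in auto)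
    have Jnn: "0 \<le> ?J" by (rule integral_nonneg[OF Ji]) simp
    have "DERIV (\<lambda>w. KummerU a b w) z :> (- ?J) / Gamma a"
      unfolding KummerU_def by (rule DERIV_cdivide[OF deriv_part[OF z a]])
    hence "deriv (\<lambda>w. KummerU a b w) z = (- ?J) / Gamma a" by (rule DERIV_imp_deriv)
    hence "Gamma a * \<bar>deriv (\<lambda>w. KummerU a b w) z\<bar> = ?J"
      using G Jnn by (simp add: abs_divide)
    then show "Gamma a * \<bar>deriv (\<lambda>w. KummerU a b w) z\<bar> \<le> Gamma b * exp z * z powr (- b)"
      using part2_bound[OF z a b] by simp
  }
qed

end
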